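(* Let $i\ge 1$ be an integer and let $H$ be a weighted graph. Let $B_1,B_2,P$ be sets of vertices of $H$ such that $d(B_1,B_2)\ge 2i+2$ and $H[P]$ is connected. If both $N^i[B_1\cup P]$ and $N^i[B_2\cup P]$ are weighted bipartite, then $N^i[B_1\cup B_2\cup P]$ is weighted bipartite.
   Context: A weighted graph is a graph with a weight function $\omega:E(H)\to\mathbb{N}$; the weight of a subgraph is the sum of its edge weights. $d(B_1,B_2)$ is the unweighted distance, i.e. the minimum number of edges of a path between a vertex of $B_1$ and a vertex of $B_2$. $N^i[S]$ is the set of vertices at unweighted distance at most $i$ from some vertex of $S$. A vertex set $S$ is weighted bipartite if $H[S]$ contains no cycle of odd weight. *)

theory Defs
  imports Main "HOL-Library.Extended_Nat"
begin

definition weighted_graph :: "'a set \<Rightarrow> ('a \<Rightarrow> 'a \<Rightarrow> bool) \<Rightarrow> ('a \<Rightarrow> 'a \<Rightarrow> nat) \<Rightarrow> bool" where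
  "weighted_graph V E w \<longleftrightarrow> finite V
     \<and> (\<forall>u v. E u v \<longrightarrow> u \<in> V \<and> v \<in> V)
     \<and> (\<forall>u v. E u v \<longrightarrow> E v u)
     \<and> (\<forall>u. \<not> E u u)
     \<and> (\<forall>u v. E u v \<longrightarrow> w u v = w v u)"

definition walk :: "('a \<Rightarrow> 'a \<Rightarrow> bool) \<Rightarrow> 'a list \<Rightarrow> bool" where
  "walk E xs \<longleftrightarrow> xs \<noteq> [] \<and> (\<forall>k. Suc k < length xs \<longrightarrow> E (xs ! k) (xs ! Suc k))"

text \<open>Unweighted distance between vertex sets (infinity if no path exists).\<close>
definition set_dist :: "('a \<Rightarrow> 'a \<Rightarrow> bool) \<Rightarrow> 'a set \<Rightarrow> 'a set \<Rightarrow> enat" where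
  "set_dist E A B = (INF xs \<in> {xs. walk E xs \<and> hd xs \<in> A \<and> last xs \<in> B}. enat (length xs - 1))"

definition closed_nbhd :: "('a \<Rightarrow> 'a \<Rightarrow> bool) \<Rightarrow> nat \<Rightarrow> 'a set \<Rightarrow> 'a set" where
  "closed_nbhd E i S = S \<union> {v. \<exists>xs. walk E xs \<and> hd xs \<in> S \<and> last xs = v \<and> length xs - 1 \<le> i}"

definition induced_connected :: "('a \<Rightarrow> 'a \<Rightarrow> bool) \<Rightarrow> 'a set \<Rightarrow> bool" where
  "induced_connected E S \<longleftrightarrow> S \<noteq> {} \<and>
     (\<forall>u\<in>S. \<forall>v\<in>S. \<exists>xs. walk E xs \<and> set xs \<subseteq> S \<and> hd xs = u \<and> last xs = v)"

definition cycle_in :: "('a \<Rightarrow> 'a \<Rightarrow> bool) \<Rightarrow> 'a set \<Rightarrow> 'a list \<Rightarrow> bool" where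
  "cycle_in E S cs \<longleftrightarrow> length cs \<ge> 3 \<and> distinct cs \<and> set cs \<subseteq> S \<and> walk E cs
     \<and> E (last cs) (hd cs)"

definition cycle_weight :: "('a \<Rightarrow> 'a \<Rightarrow> nat) \<Rightarrow> 'a list \<Rightarrow> nat" where
  "cycle_weight w cs = sum_list (map (\<lambda>(a, b). w a b) (zip cs (tl cs @ [hd cs])))"

definition weighted_bipartite :: "('a \<Rightarrow> 'a \<Rightarrow> bool) \<Rightarrow> ('a \<Rightarrow> 'a \<Rightarrow> nat) \<Rightarrow> 'a set \<Rightarrow> bool" where
  "weighted_bipartite E w S \<longleftrightarrow> \<not> (\<exists>cs. cycle_in E S cs \<and> odd (cycle_weight w cs))"

end

theory Submission
  imports Defs
begin

fun wk :: "('a \<Rightarrow> 'a \<Rightarrow> bool) \<Rightarrow> 'a list \<Rightarrow> bool" where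
  "wk E [] = False"
| "wk E [a] = True"
| "wk E (a # b # xs) = (E a b \<and> wk E (b # xs))"

fun wt :: "('a \<Rightarrow> 'a \<Rightarrow> nat) \<Rightarrow> 'a list \<Rightarrow> nat" where
  "wt w (a # b # xs) = w a b + wt w (b # xs)"
| "wt w _ = 0"

lemma walk_wk: "walk E xs = wk E xs"
proof (induction E xs rule: wk.induct)
  case (1 E)
  then show ?case by (simp add: walk_def)
next
  case (2 E a)
  then show ?case by (simp add: walk_def)
next
  case (3 E a b xs)
  have "walk E (a # b # xs) = (E a b \<and> walk E (b # xs))"
    unfolding walk_def
  proof (intro iffI conjI allI impI)
    assume h: "a # b # xs \<noteq> [] \<and> (\<forall>k. Suc k < length (a # b # xs) \<longrightarrow> E ((a # b # xs) ! k) ((a # b # xs) ! Suc k))"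
    show "E a b" using h by force
    show "b # xs \<noteq> []" by simp
    fix k assume "Suc k < length (b # xs)"
    then show "E ((b # xs) ! k) ((b # xs) ! Suc k)" using h[THEN conjunct2, rule_format, of "Suc k"] by simp
  next
    assume h: "E a b \<and> b # xs \<noteq> [] \<and> (\<forall>k. Suc k < length (b # xs) \<longrightarrow> E ((b # xs) ! k) ((b # xs) ! Suc k))"
    show "a # b # xs \<noteq> []" by simp
    fix k assume k: "Suc k < length (a # b # xs)"
    show "E ((a # b # xs) ! k) ((a # b # xs) ! Suc k)"
    proof (cases k)
      case 0 then show ?thesis using h by simp
    next
      case (Suc j) then show ?thesis using h k by simp
    qed
  qed
  then show ?case using 3 by simp
qed

lemma wk_append: "wk E (xs @ [x] @ ys) \<longleftrightarrow> wk E (xs @ [x]) \<and> wk E (x # ys)"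
proof (induction xs)
  case Nil then show ?case by simp
next
  case (Cons a xs)
  then show ?case by (cases xs) auto
qed

lemma wt_append: "wt w (xs @ [x] @ ys) = wt w (xs @ [x]) + wt w (x # ys)"
proof (induction xs)
  case Nil then show ?case by simp
next
  case (Cons a xs)
  then show ?case by (cases xs) auto
qed

lemma set_tl_sub: "set (tl xs) \<subseteq> set xs" by (cases xs) auto

lemma wk_nonempty: "wk E xs \<Longrightarrow> xs \<noteq> []" by auto

lemma wk_join:
  assumes "wk E A" "wk E B" "last A = hd B"
  shows "wk E (A @ tl B) \<and> hd (A @ tl B) = hd A \<and> last (A @ tl B) = last B
    \<and> length (A @ tl B) = length A + length B - 1"
proof -
  have A: "A \<noteq> []" and B: "B \<noteq> []" using assms wk_nonempty by auto
  obtain A' where A': "A = A' @ [last A]" using A by (metis append_butlast_last_id)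
  have B': "B = hd B # tl B" using B by simp
  have eq: "A @ tl B = A' @ [last A] @ tl B" using A' by (metis append.assoc append_Cons append_Nil)
  have "wk E (A @ tl B)" unfolding eq wk_append using assms A' B' by (metis)
  moreover have "last (A @ tl B) = last B" using assms B'
    by (metis A' append.assoc append_Cons append_Nil last_ConsL last_append last_tl)
  ultimately show ?thesis using A B by (cases B) auto
qed

lemma wt_join:
  assumes "A \<noteq> []" "B \<noteq> []" "last A = hd B"
  shows "wt w (A @ tl B) = wt w A + wt w B"
proof -
  obtain A' where A': "A = A' @ [last A]" using assms by (metis append_butlast_last_id)
  have B': "B = hd B # tl B" using assms by simp
  have eq: "A @ tl B = A' @ [last A] @ tl B" using A' by (metis append.assoc append_Cons append_Nil)
  show ?thesis unfolding eq wt_append using A' B' assms by metis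
qed

lemma wk_rev:
  assumes sym: "\<forall>u v. E u v \<longrightarrow> E v u"
  shows "wk E xs \<Longrightarrow> wk E (rev xs)"
proof (induction xs rule: induct_list012)
  case (3 a b xs)
  have "rev (a # b # xs) = rev xs @ [b] @ [a]" by simp
  then show ?case using 3 sym wk_append[of E "rev xs" b "[a]"] by auto
qed auto

lemma wt_rev:
  assumes sym: "\<forall>u v. E u v \<longrightarrow> w u v = w v u"
  shows "wk E xs \<Longrightarrow> wt w (rev xs) = wt w xs"
proof (induction xs rule: induct_list012)
  case (3 a b xs)
  have "rev (a # b # xs) = rev xs @ [b] @ [a]" by simp
  have "E a b" using 3 by simp
  then have "w a b = w b a" using sym by blast
  then show ?case using 3 sym wt_append[of w "rev xs" b "[a]"] by auto
qed auto

lemma wk_prefix: "wk E (xs @ ys) \<Longrightarrow> xs \<noteq> [] \<Longrightarrow> wk E xs"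
proof (induction xs)
  case (Cons a xs) then show ?case by (cases xs) auto
qed auto

lemma wk_snoc: "wk E xs \<Longrightarrow> E (last xs) v \<Longrightarrow> wk E (xs @ [v])"
  using wk_join[of E xs "[last xs, v]"] by auto

lemma wk_last_edge: "wk E (xs @ [a]) \<Longrightarrow> xs \<noteq> [] \<Longrightarrow> E (last xs) a"
proof -
  assume h: "wk E (xs @ [a])" "xs \<noteq> []"
  obtain xs' where "xs = xs' @ [last xs]" using h(2) by (metis append_butlast_last_id)
  then have "wk E (xs' @ [last xs] @ [a])" using h(1) by (metis append.assoc)
  then have "wk E [last xs, a]" unfolding wk_append by (rule conjunct2)
  then show ?thesis by simp
qed

lemma cw_wt: "xs \<noteq> [] \<Longrightarrow> sum_list (map (\<lambda>(a, b). w a b) (zip xs (tl xs @ [y]))) = wt w (xs @ [y])"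
proof (induction xs)
  case (Cons a xs) then show ?case by (cases xs) auto
qed auto

lemma closed_even:
  assumes wg: "weighted_graph V E w" and nb: "weighted_bipartite E w S"
  shows "wk E xs \<Longrightarrow> set xs \<subseteq> S \<Longrightarrow> hd xs = last xs \<Longrightarrow> even (wt w xs)"
proof (induction "length xs" arbitrary: xs rule: less_induct)
  case less
  have irr: "\<And>u. \<not> E u u" and sw: "\<And>u v. E u v \<Longrightarrow> w u v = w v u"
    using wg unfolding weighted_graph_def by auto
  have ne: "xs \<noteq> []" using less by auto
  show ?case
  proof (cases "length xs = 1")
    case True then show ?thesis by (cases xs) auto
  next
    case False
    obtain ys a where xs: "xs = ys @ [a]" using ne by (metis rev_exhaust)
    have ys: "ys \<noteq> []" using False xs by auto
    have hy: "hd ys = a" using less.prems xs ys by simp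
    show ?thesis
    proof (cases "distinct ys")
      case True
      have "length ys \<noteq> 0" using ys by simp
      then consider "length ys = 1" | "length ys = 2" | "length ys \<ge> 3"
        by linarith
      then show ?thesis
      proof cases
        case 1
        then have "ys = [a]" using hy by (cases ys) auto
        then show ?thesis using less.prems xs irr by simp
      next
        case 2
        then obtain b where "ys = [a, b]" using hy
          by (cases ys; cases "tl ys") auto
        then show ?thesis using less.prems xs sw by simp
      next
        case 3
        have "wk E ys" using wk_prefix[of E ys "[a]"] less.prems(1) xs ys by simp
        moreover have "E (last ys) (hd ys)" using wk_last_edge[of E ys a] less.prems(1) xs ys hy by simp
        ultimately have "cycle_in E S ys" using 3 True less.prems xs
          unfolding cycle_in_def walk_wk by auto
        moreover have "cycle_weight w ys = wt w xs"
          unfolding cycle_weight_def using cw_wt[OF ys] xs hy by simp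
        ultimately show ?thesis using nb unfolding weighted_bipartite_def by auto
      qed
    next
      case False
      then obtain L y M R where d: "ys = L @ [y] @ M @ [y] @ R"
        using not_distinct_decomp by blast
      have x1: "xs = L @ [y] @ ((M @ [y] @ R) @ [a])" using xs d by simp
      have x2: "y # (M @ [y] @ R) @ [a] = (y # M) @ [y] @ (R @ [a])" by simp
      have w1: "wk E (L @ [y])" "wk E (y # M @ [y])" "wk E (y # R @ [a])"
        using less.prems(1) unfolding x1 wk_append x2 by auto
      have t1: "wt w xs = wt w (L @ [y]) + wt w (y # M @ [y]) + wt w (y # R @ [a])"
        unfolding x1 wt_append x2 by simp
      define C where "C = L @ [y] @ R @ [a]"
      have wC: "wk E C" unfolding C_def wk_append using w1 by simp
      have tC: "wt w C = wt w (L @ [y]) + wt w (y # R @ [a])"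
        unfolding C_def wt_append by simp
      have hC: "hd C = last C" using less.prems x1 unfolding C_def by (cases L) auto
      have e1: "even (wt w (y # M @ [y]))"
        by (rule less.hyps) (use x1 w1 less.prems in auto)
      have e2: "even (wt w C)"
        by (rule less.hyps) (use x1 wC hC less.prems in \<open>auto simp: C_def\<close>)
      show ?thesis using t1 tC e1 e2 by simp
    qed
  qed
qed

definition reach where
  "reach E S x v = (\<exists>xs. wk E xs \<and> set xs \<subseteq> S \<and> hd xs = x \<and> last xs = v)"

lemma potential:
  assumes wg: "weighted_graph V E w" and nb: "weighted_bipartite E w S"
  shows "\<exists>c::'a \<Rightarrow> nat. \<forall>u v. u \<in> S \<longrightarrow> v \<in> S \<longrightarrow> E u v \<longrightarrow> even (w u v + c u + c v)"
proof -
  have symE: "\<forall>u v. E u v \<longrightarrow> E v u" and sw: "\<forall>u v. E u v \<longrightarrow> w u v = w v u"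
    using wg unfolding weighted_graph_def by auto
  have same: "even (wt w A + wt w B)" if "wk E A" "wk E B" "set A \<subseteq> S" "set B \<subseteq> S"
    "hd A = hd B" "last A = last B" for A B
  proof -
    have rB: "wk E (rev B)" using wk_rev[OF symE] that by blast
    have nA: "A \<noteq> []" and nB: "rev B \<noteq> []" using that by auto
    have l: "last A = hd (rev B)" using that nB by (simp add: hd_rev)
    have j: "wk E (A @ tl (rev B)) \<and> hd (A @ tl (rev B)) = hd A \<and> last (A @ tl (rev B)) = last (rev B)"
      using wk_join[OF that(1) rB l] by simp
    have "set (A @ tl (rev B)) \<subseteq> S" using that set_tl_sub[of "rev B"] by auto
    moreover have "hd (A @ tl (rev B)) = last (A @ tl (rev B))"
      using j that nB by (simp add: last_rev)
    ultimately have "even (wt w (A @ tl (rev B)))" using closed_even[OF wg nb] j by blast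
    moreover have "wt w (A @ tl (rev B)) = wt w A + wt w B"
      using wt_join[OF nA nB l] wt_rev[OF sw that(2)] by simp
    ultimately show ?thesis by simp
  qed
  define r where "r v = (SOME x. reach E S x v)" for v
  define p where "p v = (SOME xs. wk E xs \<and> set xs \<subseteq> S \<and> hd xs = r v \<and> last xs = v)" for v
  have pv: "wk E (p v) \<and> set (p v) \<subseteq> S \<and> hd (p v) = r v \<and> last (p v) = v" if "v \<in> S" for v
  proof -
    have "reach E S v v" unfolding reach_def using that by (intro exI[of _ "[v]"]) auto
    then have "reach E S (r v) v" unfolding r_def by (rule someI)
    then show ?thesis unfolding p_def reach_def by (rule someI_ex)
  qed
  have rr: "r u = r v" if "u \<in> S" "v \<in> S" "E u v" for u v
  proof -
    have "reach E S x u = reach E S x v" for x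
    proof
      assume "reach E S x u"
      then obtain xs where "wk E xs \<and> set xs \<subseteq> S \<and> hd xs = x \<and> last xs = u" unfolding reach_def by blast
      then show "reach E S x v" unfolding reach_def using that wk_snoc[of E xs] wk_nonempty[of E xs]
        by (intro exI[of _ "xs @ [v]"]) auto
    next
      assume "reach E S x v"
      then obtain xs where "wk E xs \<and> set xs \<subseteq> S \<and> hd xs = x \<and> last xs = v" unfolding reach_def by blast
      then show "reach E S x u" unfolding reach_def using that wk_snoc[of E xs] symE wk_nonempty[of E xs]
        by (intro exI[of _ "xs @ [u]"]) auto
    qed
    then show ?thesis unfolding r_def by simp
  qed
  show ?thesis
  proof (intro exI[of _ "\<lambda>v. wt w (p v)"] allI impI)
    fix u v assume h: "u \<in> S" "v \<in> S" "E u v"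
    have A: "wk E (p u @ [v])" using pv[OF h(1)] wk_snoc[of E "p u" v] h by simp
    have "wt w (p u @ [v]) = wt w (p u) + w u v"
      using wt_join[of "p u" "[u, v]" w] pv[OF h(1)] wk_nonempty[of E "p u"] by auto
    moreover have "even (wt w (p u @ [v]) + wt w (p v))"
      by (rule same[OF A]) (use pv[OF h(1)] pv[OF h(2)] rr[OF h] h wk_nonempty[of E "p u"] in auto)
    ultimately show "even (w u v + wt w (p u) + wt w (p v))" by (metis add.assoc add.commute)
  qed
qed

lemma walk_parity:
  assumes c: "\<forall>u v. u \<in> S \<longrightarrow> v \<in> S \<longrightarrow> E u v \<longrightarrow> even (w u v + c u + c v)"
  shows "wk E xs \<Longrightarrow> set xs \<subseteq> S \<Longrightarrow> even (wt w xs + c (hd xs) + c (last xs))"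
proof (induction xs rule: induct_list012)
  case (3 a b xs)
  then show ?case using c by auto
qed auto

lemma nbhd_iff: "v \<in> closed_nbhd E i S \<longleftrightarrow> (\<exists>xs. wk E xs \<and> hd xs \<in> S \<and> last xs = v \<and> length xs \<le> Suc i)"
  unfolding closed_nbhd_def walk_wk
  by (auto intro: exI[of _ "[v]"])

lemma walk_in_nbhd:
  assumes "wk E A" "hd A \<in> S" "length A \<le> Suc i"
  shows "set A \<subseteq> closed_nbhd E i S"
proof
  fix x assume "x \<in> set A"
  then obtain k where k: "k < length A" "A ! k = x" by (metis in_set_conv_nth)
  have t: "take (Suc k) A = take k A @ [A ! k]" using k by (simp add: take_Suc_conv_app_nth)
  have "wk E (take (Suc k) A @ drop (Suc k) A)" using assms by simp
  then have "wk E (take (Suc k) A)" using wk_prefix[of E "take (Suc k) A" "drop (Suc k) A"] t by simp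
  moreover have "hd (take (Suc k) A) = hd A" using k by (cases A) auto
  ultimately show "x \<in> closed_nbhd E i S" unfolding nbhd_iff using assms k t
    by (intro exI[of _ "take (Suc k) A"]) auto
qed

theorem lemma4p3:
  fixes V :: "'a set" and E :: "'a \<Rightarrow> 'a \<Rightarrow> bool" and w :: "'a \<Rightarrow> 'a \<Rightarrow> nat"
    and B1 B2 P :: "'a set" and i :: nat
  assumes "i \<ge> 1"
    and "weighted_graph V E w"
    and "B1 \<subseteq> V" and "B2 \<subseteq> V" and "P \<subseteq> V"
    and "set_dist E B1 B2 \<ge> enat (2 * i + 2)"
    and "induced_connected E P"
    and "weighted_bipartite E w (closed_nbhd E i (B1 \<union> P))"
    and "weighted_bipartite E w (closed_nbhd E i (B2 \<union> P))"
  shows "weighted_bipartite E w (closed_nbhd E i (B1 \<union> B2 \<union> P))"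
proof -
  note wg = assms(2)
  have symE: "\<forall>u v. E u v \<longrightarrow> E v u"
    using wg unfolding weighted_graph_def by auto
  define X where "X = closed_nbhd E i (B1 \<union> P)"
  define Y where "Y = closed_nbhd E i (B2 \<union> P)"
  define M where "M = closed_nbhd E i P"
  define Z where "Z = closed_nbhd E i (B1 \<union> B2 \<union> P)"
  have dist: "2 * i + 3 \<le> length xs" if "wk E xs" "hd xs \<in> B1" "last xs \<in> B2" for xs
  proof -
    have "set_dist E B1 B2 \<le> enat (length xs - 1)"
      unfolding set_dist_def walk_wk using that by (intro INF_lower) auto
    then have "enat (2 * i + 2) \<le> enat (length xs - 1)" using assms(6) by (rule order_trans[rotated])
    then show ?thesis by simp
  qed
  have ZXY: "Z = X \<union> Y"
  proof (rule set_eqI)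
    fix x show "x \<in> Z \<longleftrightarrow> x \<in> X \<union> Y" unfolding X_def Y_def Z_def Un_iff nbhd_iff by blast
  qed
  have MX: "M \<subseteq> X" unfolding X_def M_def closed_nbhd_def by blast
  have MY: "M \<subseteq> Y" unfolding Y_def M_def closed_nbhd_def by blast
  have inB1: "\<exists>A. wk E A \<and> hd A \<in> B1 \<and> last A = u \<and> length A \<le> Suc i" if "u \<in> X" "u \<notin> M" for u
    using that unfolding X_def M_def nbhd_iff by blast
  have inB2: "\<exists>A. wk E A \<and> hd A \<in> B2 \<and> last A = u \<and> length A \<le> Suc i" if "u \<in> Y" "u \<notin> M" for u
    using that unfolding Y_def M_def nbhd_iff by blast
  have key1: "u \<in> M" if ux: "u \<in> X" and uy: "u \<in> Y" for u
  proof (rule ccontr)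
    assume nm: "u \<notin> M"
    obtain A where A: "wk E A \<and> hd A \<in> B1 \<and> last A = u \<and> length A \<le> Suc i" using inB1[OF ux nm] by blast
    obtain B where B: "wk E B \<and> hd B \<in> B2 \<and> last B = u \<and> length B \<le> Suc i" using inB2[OF uy nm] by blast
    have rB: "wk E (rev B)" using wk_rev[OF symE] B by blast
    have nB: "B \<noteq> []" using B by auto
    have "last A = hd (rev B)" using A B nB by (simp add: hd_rev)
    from wk_join[OF _ rB this] A
    have "wk E (A @ tl (rev B)) \<and> hd (A @ tl (rev B)) = hd A \<and> last (A @ tl (rev B)) = last (rev B)
      \<and> length (A @ tl (rev B)) = length A + length B - 1" by simp
    then show False using dist[of "A @ tl (rev B)"] A B nB by (simp add: last_rev) linarith
  qed
  have key2: False if k2: "u \<in> X" "u \<notin> Y" "v \<in> Y" "v \<notin> X" "E u v" for u v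
  proof -
    have um: "u \<notin> M" and vm: "v \<notin> M" using k2 MX MY by auto
    obtain A where A: "wk E A \<and> hd A \<in> B1 \<and> last A = u \<and> length A \<le> Suc i" using inB1[OF k2(1) um] by blast
    obtain B where B: "wk E B \<and> hd B \<in> B2 \<and> last B = v \<and> length B \<le> Suc i" using inB2[OF k2(3) vm] by blast
    have nB: "B \<noteq> []" using B by auto
    have rB: "rev B = v # tl (rev B)" using nB B by (metis Nil_is_rev_conv hd_rev list.exhaust_sel)
    have "wk E (rev B)" using wk_rev[OF symE] B by blast
    then have w2: "wk E (u # rev B)" using k2(5) rB by (metis wk.simps(3))
    from wk_join[OF _ w2] A
    have "wk E (A @ rev B) \<and> hd (A @ rev B) = hd A \<and> last (A @ rev B) = last (u # rev B)
      \<and> length (A @ rev B) = length A + length B" by simp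
    then show False using dist[of "A @ rev B"] A B nB by (simp add: last_rev)
  qed
  obtain p where pP: "p \<in> P" using assms(7) unfolding induced_connected_def by blast
  have Mconn: "\<exists>xs. wk E xs \<and> set xs \<subseteq> M \<and> hd xs = p \<and> last xs = m" if mM: "m \<in> M" for m
  proof -
    obtain A where A: "wk E A \<and> hd A \<in> P \<and> last A = m \<and> length A \<le> Suc i"
      using mM unfolding M_def nbhd_iff by blast
    have sA: "set A \<subseteq> M" unfolding M_def using walk_in_nbhd A by blast
    obtain D where D: "walk E D \<and> set D \<subseteq> P \<and> hd D = p \<and> last D = hd A"
      using assms(7) pP A unfolding induced_connected_def by blast
    have PM: "P \<subseteq> M" unfolding M_def closed_nbhd_def by blast
    have "wk E (D @ tl A) \<and> hd (D @ tl A) = hd D \<and> last (D @ tl A) = last A"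
      using wk_join[of E D A] D A unfolding walk_wk by blast
    moreover have "set (D @ tl A) \<subseteq> M" using D sA PM A set_tl_sub[of A]
      by auto
    ultimately show ?thesis using D A by blast
  qed
  obtain cX :: "'a \<Rightarrow> nat" where cX: "\<forall>u v. u \<in> X \<longrightarrow> v \<in> X \<longrightarrow> E u v \<longrightarrow> even (w u v + cX u + cX v)"
    using potential[OF wg assms(8)] unfolding X_def by blast
  obtain cY :: "'a \<Rightarrow> nat" where cY: "\<forall>u v. u \<in> Y \<longrightarrow> v \<in> Y \<longrightarrow> E u v \<longrightarrow> even (w u v + cY u + cY v)"
    using potential[OF wg assms(9)] unfolding Y_def by blast
  define k where "k = cX p + cY p"
  have Mk: "even (cX m + cY m + k)" if mM: "m \<in> M" for m
  proof -
    obtain D where D: "wk E D \<and> set D \<subseteq> M \<and> hd D = p \<and> last D = m" using Mconn[OF mM] by blast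
    have "even (wt w D + cX p + cX m)" using walk_parity[OF cX] D MX by fastforce
    moreover have "even (wt w D + cY p + cY m)" using walk_parity[OF cY] D MY by fastforce
    ultimately show ?thesis unfolding k_def by simp blast
  qed
  define c where "c v = (if v \<in> X then cX v else cY v + k)" for v
  have cZ: "\<forall>u v. u \<in> Z \<longrightarrow> v \<in> Z \<longrightarrow> E u v \<longrightarrow> even (w u v + c u + c v)"
  proof (intro allI impI)
    fix u v assume h: "u \<in> Z" "v \<in> Z" "E u v"
    have h': "E v u" using h symE by blast
    show "even (w u v + c u + c v)"
    proof (cases "u \<in> X")
      case uX: True
      show ?thesis
      proof (cases "v \<in> X")
        case True then show ?thesis using uX cX h unfolding c_def by simp
      next
        case False
        then have vY: "v \<in> Y" using h ZXY by auto
        then have uY: "u \<in> Y" using key2[OF uX _ vY False h(3)] by blast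
        have "even (cX u + cY u + k)" using Mk key1 uX uY by blast
        moreover have "even (w u v + cY u + cY v)" using cY uY vY h by blast
        ultimately show ?thesis using uX False unfolding c_def by simp blast
      qed
    next
      case uX: False
      then have uY: "u \<in> Y" using h ZXY by auto
      show ?thesis
      proof (cases "v \<in> X")
        case vX: True
        then have vY: "v \<in> Y" using key2[OF vX _ uY uX h'] by blast
        have "even (cX v + cY v + k)" using Mk key1 vX vY by blast
        moreover have "even (w u v + cY u + cY v)" using cY uY vY h by blast
        ultimately show ?thesis using uX vX unfolding c_def by simp blast
      next
        case False
        then have vY: "v \<in> Y" using h ZXY by auto
        have "even (w u v + cY u + cY v)" using cY uY vY h by blast
        then show ?thesis using uX False unfolding c_def by simp blast
      qed
    qed
  qed
  show ?thesis
    unfolding weighted_bipartite_def Z_def[symmetric]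
  proof
    assume "\<exists>cs. cycle_in E Z cs \<and> odd (cycle_weight w cs)"
    then obtain cs where cs: "cycle_in E Z cs" "odd (cycle_weight w cs)" by blast
    have ne: "cs \<noteq> []" using cs unfolding cycle_in_def by auto
    have "wk E cs" "E (last cs) (hd cs)" using cs(1) unfolding cycle_in_def walk_wk by auto
    then have wc: "wk E (cs @ [hd cs])" by (rule wk_snoc)
    have "set (cs @ [hd cs]) \<subseteq> Z" using cs ne unfolding cycle_in_def by auto
    then have "even (wt w (cs @ [hd cs]) + c (hd cs) + c (hd cs))"
      using walk_parity[OF cZ wc] ne by simp
    moreover have "cycle_weight w cs = wt w (cs @ [hd cs])"
      unfolding cycle_weight_def using cw_wt[OF ne] by simp
    ultimately show False using cs by simp
  qed
qed

end
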